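(* The competitive ratio of the (offline-chosen) better algorithm between MTFO and MTFE is at least $1.75$ and at most $2$ (full cost model). That is: (i) for every list and every sequence $\sigma$, $\min\{\mathrm{MTFO}(\sigma),\mathrm{MTFE}(\sigma)\}\le 2\,\mathrm{OPT}(\sigma)$; and (ii) for every $c<1.75$ and every constant $b$ there exist a list and a sequence $\sigma$ with $\min\{\mathrm{MTFO}(\sigma),\mathrm{MTFE}(\sigma)\}>c\cdot\mathrm{OPT}(\sigma)+b$.
   Context: Static list update: a list of distinct items in some initial order; serving a request to the item at position $i$ (from the front) costs $i$ (full cost model); the accessed item may be moved closer to the front for free; two adjacent items may be swapped at cost $1$. $A(\sigma)$ is the total cost of algorithm $A$ and $\mathrm{OPT}(\sigma)$ the minimum cost of any offline algorithm from the same initial list. MTFO moves a requested item to the front on the 1st, 3rd, 5th, ... request to that item; MTFE on the 2nd, 4th, 6th, ... request; otherwise they leave it in place, and they make no paid exchanges. *)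

theory Defs
  imports Complex_Main
begin

text \<open>0-based position of an item in the list; serving it costs pos + 1.\<close>
fun pos :: "'a \<Rightarrow> 'a list \<Rightarrow> nat" where
  "pos x [] = 0"
| "pos x (y # ys) = (if x = y then 0 else Suc (pos x ys))"

definition mtf :: "'a \<Rightarrow> 'a list \<Rightarrow> 'a list" where
  "mtf x xs = x # remove1 x xs"

fun alg_cost :: "(nat \<Rightarrow> bool) \<Rightarrow> 'a list \<Rightarrow> 'a list \<Rightarrow> 'a list \<Rightarrow> nat" where
  "alg_cost P xs hist [] = 0"
| "alg_cost P xs hist (x # \<sigma>) =
     pos x xs + 1 +
     alg_cost P (if P (count_list hist x + 1) then mtf x xs else xs) (hist @ [x]) \<sigma>"

definition MTFO :: "'a list \<Rightarrow> 'a list \<Rightarrow> nat" where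
  "MTFO init \<sigma> = alg_cost odd init [] \<sigma>"

definition MTFE :: "'a list \<Rightarrow> 'a list \<Rightarrow> nat" where
  "MTFE init \<sigma> = alg_cost even init [] \<sigma>"

text \<open>Paid exchange of the adjacent positions j, j+1 (no-op if out of range; it still
  costs 1, which is a dominated action and does not affect the optimum).\<close>
definition swap_adj :: "nat \<Rightarrow> 'a list \<Rightarrow> 'a list" where
  "swap_adj j xs = (if Suc j < length xs then xs[j := xs ! Suc j, Suc j := xs ! j] else xs)"

definition move_fwd :: "'a \<Rightarrow> nat \<Rightarrow> 'a list \<Rightarrow> 'a list" where
  "move_fwd x k ys = (let zs = remove1 x ys in take k zs @ x # drop k zs)"

text \<open>Offline algorithm: for each request, an action (sw, k): first perform the paid
  adjacent exchanges sw (cost 1 each), then serve the request, then move the accessed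
  item forward for free to position min k (its position).\<close>
fun off_cost :: "'a list \<Rightarrow> 'a list \<Rightarrow> (nat list \<times> nat) list \<Rightarrow> nat" where
  "off_cost xs [] acts = 0"
| "off_cost xs (x # \<sigma>) [] = 0"
| "off_cost xs (x # \<sigma>) ((sw, k) # acts) =
     (let ys = fold swap_adj sw xs
      in length sw + pos x ys + 1 + off_cost (move_fwd x (min k (pos x ys)) ys) \<sigma> acts)"

definition OPT :: "'a list \<Rightarrow> 'a list \<Rightarrow> nat" where
  "OPT init \<sigma> = (INF acts \<in> {acts. length acts = length \<sigma>}. off_cost init \<sigma> acts)"

end

theory Submission
  imports Defs
begin


definition bef :: "'a list \<Rightarrow> 'a \<Rightarrow> 'a \<Rightarrow> bool" where
  "bef L a b \<longleftrightarrow> pos a L < pos b L"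

lemma pos_lt: "x \<in> set L \<Longrightarrow> pos x L < length L"
  by (induction L) auto

lemma pos_notin: "x \<notin> set L \<Longrightarrow> pos x L = length L"
  by (induction L) auto

lemma nth_pos: "x \<in> set L \<Longrightarrow> L ! pos x L = x"
  by (induction L) auto

lemma pos_nth: "distinct L \<Longrightarrow> i < length L \<Longrightarrow> pos (L!i) L = i"
proof (induction L arbitrary: i)
  case Nil then show ?case by simp
next
  case (Cons a L) then show ?case by (cases i) (auto simp: nth_mem)
qed

lemma pos_inj: "a \<in> set L \<Longrightarrow> pos a L = pos b L \<Longrightarrow> a = b"
  by (metis nth_pos pos_lt pos_notin less_irrefl)

lemma pos_append: "pos x (as @ bs) = (if x \<in> set as then pos x as else length as + pos x bs)"
  by (induction as) auto

lemma pos_remove1: "x \<in> set L \<Longrightarrow> y \<noteq> x \<Longrightarrow>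
  pos y (remove1 x L) = (if pos y L < pos x L then pos y L else pos y L - 1)"
proof (induction L)
  case Nil then show ?case by simp
next
  case (Cons z L)
  show ?case
  proof (cases "x = z")
    case True then show ?thesis using Cons.prems by auto
  next
    case False
    then have xL: "x \<in> set L" using Cons.prems by auto
    have ne: "pos y L \<noteq> pos x L" using pos_inj[OF xL, of y] Cons.prems by metis
    show ?thesis using Cons.IH[OF xL Cons.prems(2)] False Cons.prems(2) ne by auto
  qed
qed

lemma pos_ins: "a \<noteq> x \<Longrightarrow> a \<in> set zs \<Longrightarrow>
  pos a (take k zs @ x # drop k zs) = (if pos a zs < k then pos a zs else Suc (pos a zs))"
proof (induction zs arbitrary: k)
  case Nil then show ?case by simp
next
  case (Cons z zs) then show ?case by (cases k) auto
qed

lemma bef_asym: "a \<in> set L \<Longrightarrow> b \<in> set L \<Longrightarrow> a \<noteq> b \<Longrightarrow> bef L b a \<longleftrightarrow> \<not> bef L a b"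
  unfolding bef_def using pos_inj by (metis linorder_neq_iff less_asym)

lemma pos_card: "distinct L \<Longrightarrow> x \<in> set L \<Longrightarrow> pos x L = card {y \<in> set L. bef L y x}"
proof (induction L)
  case Nil then show ?case by simp
next
  case (Cons z L)
  show ?case
  proof (cases "x = z")
    case True
    then have "{y \<in> set (z#L). bef (z#L) y x} = {}" by (auto simp: bef_def)
    then show ?thesis using True by simp
  next
    case False
    then have x: "x \<in> set L" using Cons by auto
    have "{y \<in> set (z#L). bef (z#L) y x} = insert z {y \<in> set L. bef L y x}"
      using False Cons.prems by (auto simp: bef_def split: if_splits)
    moreover have "z \<notin> {y \<in> set L. bef L y x}" using Cons.prems by auto
    ultimately show ?thesis using Cons x False by simp
  qed
qed

lemma bef_mtf: "x \<in> set L \<Longrightarrow> a \<in> set L \<Longrightarrow> b \<in> set L \<Longrightarrow> a \<noteq> b \<Longrightarrow>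
  bef (mtf x L) a b = (if a = x then True else if b = x then False else bef L a b)"
proof -
  assume h: "x \<in> set L" "a \<in> set L" "b \<in> set L" "a \<noteq> b"
  have n1: "a \<noteq> x \<Longrightarrow> pos a L \<noteq> pos x L" using pos_inj h by metis
  have n2: "b \<noteq> x \<Longrightarrow> pos b L \<noteq> pos x L" using pos_inj h by metis
  have n3: "pos a L \<noteq> pos b L" using pos_inj h by metis
  show ?thesis unfolding bef_def mtf_def using h n1 n2 n3
    by (auto simp: pos_remove1)
qed

lemma mtf_set: "x \<in> set L \<Longrightarrow> set (mtf x L) = set L"
  unfolding mtf_def by (auto simp: in_set_remove1 dest: set_remove1_subset[THEN subsetD]) (metis in_set_remove1)

lemma mtf_distinct: "distinct L \<Longrightarrow> distinct (mtf x L)"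
  unfolding mtf_def by (auto simp: distinct_remove1 set_remove1_eq)

lemma mtf_cases_set: "x \<in> set L \<Longrightarrow> set (if P then mtf x L else L) = set L"
  by (simp add: mtf_set)

lemma mtf_cases_distinct: "distinct L \<Longrightarrow> distinct (if P then mtf x L else L)"
  using mtf_distinct by auto

lemma bef_irrefl[simp]: "\<not> bef L a a" by (simp add: bef_def)

lemma move_fwd_props:
  assumes d: "distinct ys" and x: "x \<in> set ys" and k: "k \<le> pos x ys"
  shows "set (move_fwd x k ys) = set ys" "distinct (move_fwd x k ys)"
    "\<And>a b. a \<in> set ys \<Longrightarrow> b \<in> set ys \<Longrightarrow> a \<noteq> x \<Longrightarrow> b \<noteq> x \<Longrightarrow>
        bef (move_fwd x k ys) a b = bef ys a b"
    "\<And>y. y \<in> set ys \<Longrightarrow> y \<noteq> x \<Longrightarrow> bef ys x y \<Longrightarrow> bef (move_fwd x k ys) x y"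
proof -
  define zs where "zs = remove1 x ys"
  have mf: "move_fwd x k ys = take k zs @ x # drop k zs" by (simp add: move_fwd_def zs_def Let_def)
  have dz: "distinct zs" using d by (simp add: zs_def distinct_remove1)
  have sz: "set zs = set ys - {x}" using d by (simp add: zs_def set_remove1_eq)
  have xz: "x \<notin> set zs" using sz by auto
  have std: "set (take k zs) \<union> set (drop k zs) = set zs"
    by (metis append_take_drop_id set_append)
  have dtd: "distinct (take k zs @ drop k zs)" using dz by simp
  show "set (move_fwd x k ys) = set ys" unfolding mf using std sz x by auto
  show "distinct (move_fwd x k ys)" unfolding mf using dtd[unfolded distinct_append] xz std
    by (auto simp: distinct_append)
  have pz: "\<And>a. a \<in> set ys \<Longrightarrow> a \<noteq> x \<Longrightarrow>
     pos a (move_fwd x k ys) = (if pos a zs < k then pos a zs else Suc (pos a zs))"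
    unfolding mf by (rule pos_ins) (auto simp: sz)
  have pr: "\<And>a. a \<in> set ys \<Longrightarrow> a \<noteq> x \<Longrightarrow>
     pos a zs = (if pos a ys < pos x ys then pos a ys else pos a ys - 1)"
    unfolding zs_def using x by (rule pos_remove1)
  have ne: "\<And>a. a \<in> set ys \<Longrightarrow> a \<noteq> x \<Longrightarrow> pos a ys \<noteq> pos x ys"
    using pos_inj by metis
  show "\<And>a b. a \<in> set ys \<Longrightarrow> b \<in> set ys \<Longrightarrow> a \<noteq> x \<Longrightarrow> b \<noteq> x \<Longrightarrow>
        bef (move_fwd x k ys) a b = bef ys a b"
  proof -
    fix a b assume h: "a \<in> set ys" "b \<in> set ys" "a \<noteq> x" "b \<noteq> x"
    show "bef (move_fwd x k ys) a b = bef ys a b"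
      unfolding bef_def using pz[OF h(1,3)] pz[OF h(2,4)] pr[OF h(1,3)] pr[OF h(2,4)]
        ne[OF h(1,3)] ne[OF h(2,4)] by auto
  qed
  show "\<And>y. y \<in> set ys \<Longrightarrow> y \<noteq> x \<Longrightarrow> bef ys x y \<Longrightarrow> bef (move_fwd x k ys) x y"
  proof -
    fix y assume h: "y \<in> set ys" "y \<noteq> x" "bef ys x y"
    have px: "pos x (move_fwd x k ys) \<le> k" unfolding mf
      using xz by (auto simp: pos_append dest: in_set_takeD)
    show "bef (move_fwd x k ys) x y"
      unfolding bef_def using px pz[OF h(1,2)] pr[OF h(1,2)] h(3) k unfolding bef_def by auto
  qed
qed

lemma swap_props:
  assumes d: "distinct L"
  shows "set (swap_adj j L) = set L" "distinct (swap_adj j L)"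
    "\<And>a b. a \<in> set L \<Longrightarrow> b \<in> set L \<Longrightarrow>
       \<not> (Suc j < length L \<and> ((a = L!j \<and> b = L!Suc j) \<or> (a = L!Suc j \<and> b = L!j))) \<Longrightarrow>
        bef (swap_adj j L) a b = bef L a b"
proof -
  show "set (swap_adj j L) = set L" by (simp add: swap_adj_def)
  show ds: "distinct (swap_adj j L)" using d by (simp add: swap_adj_def)
  fix a b assume a: "a \<in> set L" and b: "b \<in> set L" and
    nb: "\<not> (Suc j < length L \<and> ((a = L!j \<and> b = L!Suc j) \<or> (a = L!Suc j \<and> b = L!j)))"
  show "bef (swap_adj j L) a b = bef L a b"
  proof (cases "Suc j < length L")
    case False then show ?thesis by (simp add: swap_adj_def)
  next
    case True
    define t where "t = (\<lambda>i::nat. if i = j then Suc j else if i = Suc j then j else i)"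
    have len: "length (swap_adj j L) = length L" by (simp add: swap_adj_def)
    have key: "\<And>c. c \<in> set L \<Longrightarrow> pos c (swap_adj j L) = t (pos c L)"
    proof -
      fix c assume c: "c \<in> set L"
      have pl: "pos c L < length L" using c by (rule pos_lt)
      have "swap_adj j L ! t (pos c L) = c"
        using True pl nth_pos[OF c] by (auto simp: swap_adj_def t_def nth_list_update)
      moreover have "t (pos c L) < length L" using True pl by (auto simp: t_def)
      ultimately show "pos c (swap_adj j L) = t (pos c L)"
        using pos_nth[OF ds, of "t (pos c L)"] len by simp
    qed
    have n1: "\<not> (pos a L = j \<and> pos b L = Suc j)" using nb nth_pos[OF a] nth_pos[OF b] True by auto
    have n2: "\<not> (pos a L = Suc j \<and> pos b L = j)" using nb nth_pos[OF a] nth_pos[OF b] True by auto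
    show ?thesis unfolding bef_def key[OF a] key[OF b] using n1 n2 by (auto simp: t_def)
  qed
qed

definition phi :: "bool \<Rightarrow> bool \<Rightarrow> bool \<Rightarrow> bool \<Rightarrow> bool \<Rightarrow> nat" where
  "phi A B C p q = (if A = B then (if A = C then 0 else 4) else if p = q then 2 else if A = p then 1 else 4)"

lemma phi_le: "phi A B C p q \<le> 4" by (simp add: phi_def)

lemma local_ineq: "C \<longrightarrow> C' \<Longrightarrow>
  2*(of_bool (\<not>A) + of_bool (\<not>B)) + phi (\<not>p \<or> A) (p \<or> B) C' (\<not>p) q
     + phi (\<not>(\<not>p \<or> A)) (\<not>(p \<or> B)) (\<not>C') q (\<not>p)
  \<le> 8*of_bool (\<not>C) + phi A B C p q + phi (\<not>A) (\<not>B) (\<not>C) q p"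
  by (cases A; cases B; cases C; cases C'; cases p; cases q) (simp_all add: phi_def)

definition Fp where
  "Fp LA LB LO h a b = phi (bef LA a b) (bef LB a b) (bef LO a b) (odd (count_list h a)) (odd (count_list h b))"

definition Pot where
  "Pot S LA LB LO h = (\<Sum>a\<in>S. \<Sum>b\<in>S-{a}. Fp LA LB LO h a b)"

lemma pot_split:
  assumes "finite S" "x \<in> S"
  shows "(\<Sum>a\<in>S. \<Sum>b\<in>S-{a}. F a b) =
    (\<Sum>y\<in>S-{x}. F x y + F y x) + (\<Sum>a\<in>S-{x}. \<Sum>b\<in>S-{a}-{x}. F a b)"
proof -
  have 1: "(\<Sum>a\<in>S. \<Sum>b\<in>S-{a}. F a b) = (\<Sum>b\<in>S-{x}. F x b) + (\<Sum>a\<in>S-{x}. \<Sum>b\<in>S-{a}. F a b)"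
    using assms by (simp add: sum.remove)
  have 2: "(\<Sum>b\<in>S-{a}. F a b) = F a x + (\<Sum>b\<in>S-{a}-{x}. F a b)" if "a \<in> S - {x}" for a
    using assms that by (subst sum.remove[of _ x]) auto
  have 3: "(\<Sum>a\<in>S-{x}. \<Sum>b\<in>S-{a}. F a b) = (\<Sum>a\<in>S-{x}. F a x + (\<Sum>b\<in>S-{a}-{x}. F a b))"
    by (rule sum.cong) (auto simp: 2)
  show ?thesis unfolding 1 3 by (simp add: sum.distrib ac_simps)
qed

lemma card_sum: "finite S \<Longrightarrow> card {y\<in>S. P y} = (\<Sum>y\<in>S. of_bool (P y) :: nat)"
  by (simp add: sum.inter_filter[symmetric] of_bool_def)


lemma pos_sum: "distinct L \<Longrightarrow> set L = S \<Longrightarrow> x \<in> S \<Longrightarrow>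
  pos x L = (\<Sum>y\<in>S-{x}. of_bool (bef L y x))"
proof -
  assume h: "distinct L" "set L = S" "x \<in> S"
  have fin: "finite S" using h(2) by auto
  have "pos x L = card {y\<in>S. bef L y x}" using pos_card[OF h(1)] h by simp
  also have "\<dots> = (\<Sum>y\<in>S. of_bool (bef L y x))" by (rule card_sum) (use fin in auto)
  also have "\<dots> = of_bool (bef L x x) + (\<Sum>y\<in>S-{x}. of_bool (bef L y x))"
    by (rule sum.remove) (use h fin in auto)
  also have "\<dots> = (\<Sum>y\<in>S-{x}. of_bool (bef L y x))" by simp
  finally show ?thesis .
qed

lemma dsum_le1:
  assumes "finite S" "finite T"
  shows "(\<Sum>a\<in>S. \<Sum>b\<in>T. (if a = u \<and> b = v then 1 else 0::nat)) \<le> 1"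
proof -
  have "\<And>a. (\<Sum>b\<in>T. (if a = u \<and> b = v then 1 else 0::nat)) = (if a = u then (if v \<in> T then 1 else 0) else 0)"
    by (case_tac "a = u") (simp_all add: assms)
  then show ?thesis using assms by (cases "u \<in> S") (simp_all add: sum.delta)
qed

lemma pot_swap:
  assumes d: "distinct L" and sL: "set L = S"
  shows "Pot S LA LB (swap_adj j L) h \<le> Pot S LA LB L h + 8"
proof -
  have fin: "finite S" using sL by auto
  define u where "u = L!j"
  define v where "v = L!Suc j"
  define g where "g = (\<lambda>a b. 4 * (if a = u \<and> b = v then 1 else 0::nat) + 4 * (if a = v \<and> b = u then 1 else 0))"
  have pt: "Fp LA LB (swap_adj j L) h a b \<le> Fp LA LB L h a b + g a b" if "a \<in> S" "b \<in> S" for a b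
  proof (cases "Suc j < length L \<and> ((a = L!j \<and> b = L!Suc j) \<or> (a = L!Suc j \<and> b = L!j))")
    case True
    then have "g a b \<ge> 4" unfolding g_def u_def v_def by auto
    then show ?thesis using phi_le unfolding Fp_def by (meson le_add2 order_trans)
  next
    case False
    then show ?thesis using swap_props(3)[OF d, of a b j] that sL unfolding Fp_def by simp
  qed
  have "Pot S LA LB (swap_adj j L) h \<le> (\<Sum>a\<in>S. \<Sum>b\<in>S-{a}. Fp LA LB L h a b + g a b)"
    unfolding Pot_def by (intro sum_mono) (use pt in auto)
  also have "\<dots> = Pot S LA LB L h + (\<Sum>a\<in>S. \<Sum>b\<in>S-{a}. g a b)"
    unfolding Pot_def by (simp add: sum.distrib)
  also have "(\<Sum>a\<in>S. \<Sum>b\<in>S-{a}. g a b) \<le> (\<Sum>a\<in>S. \<Sum>b\<in>S. g a b)"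
    by (intro sum_mono sum_mono2) (use fin in auto)
  also have "\<dots> = 4 * (\<Sum>a\<in>S. \<Sum>b\<in>S. (if a = u \<and> b = v then 1 else 0::nat))
       + 4 * (\<Sum>a\<in>S. \<Sum>b\<in>S. (if a = v \<and> b = u then 1 else 0::nat))"
    unfolding g_def by (simp add: sum.distrib sum_distrib_left)
  also have "\<dots> \<le> 8" using dsum_le1[OF fin fin, of u v] dsum_le1[OF fin fin, of v u] by linarith
  finally show ?thesis by simp
qed

lemma pot_fold:
  "distinct L \<Longrightarrow> set L = S \<Longrightarrow>
   Pot S LA LB (fold swap_adj sw L) h \<le> Pot S LA LB L h + 8 * length sw
   \<and> distinct (fold swap_adj sw L) \<and> set (fold swap_adj sw L) = S"
proof (induction sw arbitrary: L)
  case Nil then show ?case by simp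
next
  case (Cons j sw)
  have d: "distinct (swap_adj j L)" "set (swap_adj j L) = S" using swap_props[OF Cons.prems(1)] Cons.prems by auto
  have "Pot S LA LB (swap_adj j L) h \<le> Pot S LA LB L h + 8" by (rule pot_swap) (use Cons.prems in auto)
  then show ?case using Cons.IH[OF d] by auto
qed

lemma pot_req:
  assumes fin: "finite S" and dA: "distinct LA" and dB: "distinct LB" and dY: "distinct ys"
    and sA: "set LA = S" and sB: "set LB = S" and sY: "set ys = S" and x: "x \<in> S"
    and kk: "k' \<le> pos x ys"
  shows "2*(pos x LA + 1 + (pos x LB + 1))
    + Pot S (if odd (count_list h x + 1) then mtf x LA else LA)
            (if even (count_list h x + 1) then mtf x LB else LB) (move_fwd x k' ys) (h@[x])
    \<le> 8*(pos x ys + 1) + Pot S LA LB ys h"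
proof -
  define LA' where "LA' = (if odd (count_list h x + 1) then mtf x LA else LA)"
  define LB' where "LB' = (if even (count_list h x + 1) then mtf x LB else LB)"
  define LO' where "LO' = move_fwd x k' ys"
  define h' where "h' = h @ [x]"
  have xA: "x \<in> set LA" and xB: "x \<in> set LB" and xY: "x \<in> set ys" using x sA sB sY by auto
  have sA': "set LA' = S" unfolding LA'_def using mtf_cases_set[OF xA] sA by simp
  have sB': "set LB' = S" unfolding LB'_def using mtf_cases_set[OF xB] sB by simp
  have sO': "set LO' = S" unfolding LO'_def using move_fwd_props(1)[OF dY xY kk] sY by simp
  note mv = move_fwd_props[OF dY xY kk]
  define F where "F = Fp LA LB ys h"
  define F' where "F' = Fp LA' LB' LO' h'"
  have eqR: "F' a b = F a b" if "a \<in> S - {x}" "b \<in> S - {a} - {x}" for a b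
  proof -
    have "bef LA' a b = bef LA a b" unfolding LA'_def using bef_mtf[OF xA, of a b] that sA by auto
    moreover have "bef LB' a b = bef LB a b" unfolding LB'_def using bef_mtf[OF xB, of a b] that sB by auto
    moreover have "bef LO' a b = bef ys a b" unfolding LO'_def using mv(3)[of a b] that sY by auto
    moreover have "count_list h' a = count_list h a" "count_list h' b = count_list h b"
      using that unfolding h'_def by auto
    ultimately show ?thesis unfolding F_def F'_def Fp_def by simp
  qed
  have loc: "2*(of_bool (bef LA y x) + of_bool (bef LB y x)) + (F' x y + F' y x)
      \<le> 8*of_bool (bef ys y x) + (F x y + F y x)" if y: "y \<in> S - {x}" for y
  proof -
    define A where "A = bef LA x y"
    define B where "B = bef LB x y"
    define C where "C = bef ys x y"
    define C' where "C' = bef LO' x y"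
    define p where "p = odd (count_list h x)"
    define q where "q = odd (count_list h y)"
    have yy: "y \<noteq> x" "y \<in> S" using y by auto
    have 1: "bef LA y x = (\<not>A)" unfolding A_def using bef_asym[of x LA y] yy x sA by auto
    have 2: "bef LB y x = (\<not>B)" unfolding B_def using bef_asym[of x LB y] yy x sB by auto
    have 3: "bef ys y x = (\<not>C)" unfolding C_def using bef_asym[of x ys y] yy x sY by auto
    have 4: "bef LO' y x = (\<not>C')" unfolding C'_def using bef_asym[of x LO' y] yy x sO' by auto
    have 5: "bef LA' x y = (\<not>p \<or> A)"
      unfolding LA'_def A_def p_def using bef_mtf[OF xA, of x y] xA yy sA by auto
    have 6: "bef LB' x y = (p \<or> B)"
      unfolding LB'_def B_def p_def using bef_mtf[OF xB, of x y] xB yy sB by auto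
    have 7: "bef LA' y x = (\<not>(\<not>p \<or> A))" using bef_asym[of x LA' y] yy x sA' 5 by auto
    have 8: "bef LB' y x = (\<not>(p \<or> B))" using bef_asym[of x LB' y] yy x sB' 6 by auto
    have 9: "C \<longrightarrow> C'" unfolding C_def C'_def LO'_def using mv(4)[of y] yy sY by auto
    have 10: "odd (count_list h' x) = (\<not>p)" "odd (count_list h' y) = q"
      unfolding h'_def p_def q_def using yy by auto
    show ?thesis unfolding F_def F'_def Fp_def 1 2 3 4 5 6 7 8 10
      using local_ineq[OF 9, of A B p q] unfolding A_def[symmetric] B_def[symmetric] C_def[symmetric]
        C'_def[symmetric] p_def[symmetric] q_def[symmetric] by simp
  qed
  have psA: "pos x LA = (\<Sum>y\<in>S-{x}. of_bool (bef LA y x))" by (rule pos_sum) (use dA sA x in auto)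
  have psB: "pos x LB = (\<Sum>y\<in>S-{x}. of_bool (bef LB y x))" by (rule pos_sum) (use dB sB x in auto)
  have psY: "pos x ys = (\<Sum>y\<in>S-{x}. of_bool (bef ys y x))" by (rule pos_sum) (use dY sY x in auto)
  have P': "Pot S LA' LB' LO' h' = (\<Sum>y\<in>S-{x}. F' x y + F' y x) + (\<Sum>a\<in>S-{x}. \<Sum>b\<in>S-{a}-{x}. F' a b)"
    unfolding Pot_def F'_def using pot_split[OF fin x] by blast
  have P: "Pot S LA LB ys h = (\<Sum>y\<in>S-{x}. F x y + F y x) + (\<Sum>a\<in>S-{x}. \<Sum>b\<in>S-{a}-{x}. F a b)"
    unfolding Pot_def F_def using pot_split[OF fin x] by blast
  have R: "(\<Sum>a\<in>S-{x}. \<Sum>b\<in>S-{a}-{x}. F' a b) = (\<Sum>a\<in>S-{x}. \<Sum>b\<in>S-{a}-{x}. F a b)"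
    using eqR by (intro sum.cong) auto
  have L: "(\<Sum>y\<in>S-{x}. 2*(of_bool (bef LA y x) + of_bool (bef LB y x)) + (F' x y + F' y x))
     \<le> (\<Sum>y\<in>S-{x}. 8*of_bool (bef ys y x) + (F x y + F y x))"
    using loc by (intro sum_mono) auto
  have "2*(pos x LA + 1 + (pos x LB + 1)) + Pot S LA' LB' LO' h'
      = 4 + (\<Sum>y\<in>S-{x}. 2*(of_bool (bef LA y x) + of_bool (bef LB y x)) + (F' x y + F' y x))
        + (\<Sum>a\<in>S-{x}. \<Sum>b\<in>S-{a}-{x}. F a b)"
    unfolding P' R psA psB by (simp add: sum.distrib sum_distrib_left algebra_simps)
  also have "\<dots> \<le> 4 + (\<Sum>y\<in>S-{x}. 8*of_bool (bef ys y x) + (F x y + F y x))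
        + (\<Sum>a\<in>S-{x}. \<Sum>b\<in>S-{a}-{x}. F a b)" using L by simp
  also have "\<dots> \<le> 8*(pos x ys + 1) + Pot S LA LB ys h"
    unfolding P psY by (simp add: sum.distrib sum_distrib_left algebra_simps)
  finally show ?thesis unfolding LA'_def LB'_def LO'_def h'_def .
qed



lemma main_ineq:
  "distinct LA \<Longrightarrow> distinct LB \<Longrightarrow> distinct LO \<Longrightarrow> set LA = S \<Longrightarrow> set LB = S \<Longrightarrow> set LO = S
   \<Longrightarrow> set \<sigma> \<subseteq> S \<Longrightarrow> length acts = length \<sigma> \<Longrightarrow>
   2*(alg_cost odd LA h \<sigma> + alg_cost even LB h \<sigma>) \<le> 8*off_cost LO \<sigma> acts + Pot S LA LB LO h"
proof (induction \<sigma> arbitrary: LA LB LO h acts)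
  case Nil then show ?case by simp
next
  case (Cons x \<sigma>)
  obtain sw k acts' where acts: "acts = (sw,k) # acts'" and la: "length acts' = length \<sigma>"
    using Cons.prems(8) by (cases acts) auto
  have fin: "finite S" using Cons.prems(4) by auto
  have x: "x \<in> S" using Cons.prems(7) by auto
  define ys where "ys = fold swap_adj sw LO"
  have fy: "Pot S LA LB ys h \<le> Pot S LA LB LO h + 8 * length sw" "distinct ys" "set ys = S"
    using pot_fold[OF Cons.prems(3,6)] unfolding ys_def by auto
  define k' where "k' = min k (pos x ys)"
  have kk: "k' \<le> pos x ys" unfolding k'_def by simp
  define LA' where "LA' = (if odd (count_list h x + 1) then mtf x LA else LA)"
  define LB' where "LB' = (if even (count_list h x + 1) then mtf x LB else LB)"
  define LO' where "LO' = move_fwd x k' ys"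
  have xA: "x \<in> set LA" "x \<in> set LB" "x \<in> set ys" using x Cons.prems fy by auto
  have inv: "distinct LA'" "distinct LB'" "distinct LO'" "set LA' = S" "set LB' = S" "set LO' = S"
    unfolding LA'_def LB'_def LO'_def
    using mtf_distinct Cons.prems mtf_cases_set[OF xA(1)] mtf_cases_set[OF xA(2)]
      move_fwd_props(1,2)[OF fy(2) xA(3) kk] fy(3) by auto
  have IH: "2*(alg_cost odd LA' (h@[x]) \<sigma> + alg_cost even LB' (h@[x]) \<sigma>)
      \<le> 8*off_cost LO' \<sigma> acts' + Pot S LA' LB' LO' (h@[x])"
    using Cons.IH[OF inv] Cons.prems(7) la by auto
  have req: "2*(pos x LA + 1 + (pos x LB + 1)) + Pot S LA' LB' LO' (h@[x])
     \<le> 8*(pos x ys + 1) + Pot S LA LB ys h"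
    unfolding LA'_def LB'_def LO'_def
    by (rule pot_req[OF fin Cons.prems(1,2) fy(2) Cons.prems(4,5) fy(3) x kk])
  have eA: "alg_cost odd LA h (x#\<sigma>) = pos x LA + 1 + alg_cost odd LA' (h@[x]) \<sigma>"
    unfolding LA'_def by (simp only: alg_cost.simps)
  have eB: "alg_cost even LB h (x#\<sigma>) = pos x LB + 1 + alg_cost even LB' (h@[x]) \<sigma>"
    unfolding LB'_def by (simp only: alg_cost.simps)
  have eO: "off_cost LO (x#\<sigma>) acts = length sw + pos x ys + 1 + off_cost LO' \<sigma> acts'"
    unfolding acts LO'_def k'_def ys_def by (simp only: off_cost.simps Let_def)
  show ?case unfolding eA eB eO using IH req fy(1) by (simp add: distrib_left)
qed

lemma pot_init: "Pot S L L L [] = 0"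
  unfolding Pot_def Fp_def phi_def by simp

lemma part1:
  fixes init :: "'a list"
  assumes d: "distinct init" and s: "set \<sigma> \<subseteq> set init"
  shows "min (MTFO init \<sigma>) (MTFE init \<sigma>) \<le> 2 * OPT init \<sigma>"
proof -
  define A :: "(nat list \<times> nat) list set" where "A = {acts. length acts = length \<sigma>}"
  have ne: "(\<lambda>acts. off_cost init \<sigma> acts) ` A \<noteq> {}"
    unfolding A_def by (auto intro!: exI[of _ "replicate (length \<sigma>) ([],0)"])
  have "OPT init \<sigma> \<in> (\<lambda>acts. off_cost init \<sigma> acts) ` A"
    unfolding OPT_def A_def[symmetric] using Inf_nat_def1[OF ne] by simp
  then obtain acts where la: "length acts = length \<sigma>" and eq: "OPT init \<sigma> = off_cost init \<sigma> acts"
    unfolding A_def by auto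
  have "2*(MTFO init \<sigma> + MTFE init \<sigma>) \<le> 8*off_cost init \<sigma> acts + Pot (set init) init init init []"
    unfolding MTFO_def MTFE_def by (rule main_ineq) (use d s la in auto)
  moreover have "\<And>a b c::nat. 2*(a+b) \<le> 8*c + 0 \<Longrightarrow> min a b \<le> 2*c" by (simp add: min_def)
  ultimately show ?thesis unfolding eq pot_init by blast
qed



fun run :: "'a list \<Rightarrow> ('a \<times> bool) list \<Rightarrow> nat" where
  "run L [] = 0"
| "run L ((x,b)#ds) = pos x L + 1 + run (if b then mtf x L else L) ds"

fun fst_state :: "'a list \<Rightarrow> ('a \<times> bool) list \<Rightarrow> 'a list" where
  "fst_state L [] = L"
| "fst_state L ((x,b)#ds) = fst_state (if b then mtf x L else L) ds"

lemma run_append: "run L (d1@d2) = run L d1 + run (fst_state L d1) d2"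
  by (induction L d1 rule: run.induct) auto

lemma fst_state_append: "fst_state L (d1@d2) = fst_state (fst_state L d1) d2"
  by (induction L d1 rule: run.induct) auto

fun dec :: "(nat \<Rightarrow> bool) \<Rightarrow> 'a list \<Rightarrow> 'a list \<Rightarrow> ('a \<times> bool) list" where
  "dec P h [] = []"
| "dec P h (x#\<sigma>) = (x, P (count_list h x + 1)) # dec P (h@[x]) \<sigma>"

lemma alg_run: "alg_cost P L h \<sigma> = run L (dec P h \<sigma>)"
  by (induction \<sigma> arbitrary: L h) auto

lemma dec_append: "dec P h (a@b) = dec P h a @ dec P (h@a) b"
  by (induction a arbitrary: h) auto

definition dbl :: "'a list \<Rightarrow> 'a list" where
  "dbl xs = concat (map (\<lambda>i. [i,i]) xs)"

lemma dec_single: "distinct xs \<Longrightarrow> \<forall>i\<in>set xs. count_list h i = c \<Longrightarrow>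
   dec P h xs = map (\<lambda>i. (i, P (c+1))) xs"
proof (induction xs arbitrary: h)
  case Nil then show ?case by simp
next
  case (Cons a xs)
  have "\<forall>i\<in>set xs. count_list (h@[a]) i = c" using Cons.prems by auto
  then have "dec P (h@[a]) xs = map (\<lambda>i. (i, P (c+1))) xs" using Cons.IH Cons.prems by simp
  then show ?case using Cons.prems by simp
qed

lemma dec_dbl: "distinct xs \<Longrightarrow> \<forall>i\<in>set xs. count_list h i = c \<Longrightarrow>
   dec P h (dbl xs) = concat (map (\<lambda>i. [(i, P (c+1)), (i, P (c+2))]) xs)"
proof (induction xs arbitrary: h)
  case Nil then show ?case by (simp add: dbl_def)
next
  case (Cons a xs)
  have "\<forall>i\<in>set xs. count_list (h@[a,a]) i = c" using Cons.prems by auto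
  then have "dec P (h@[a,a]) (dbl xs) = concat (map (\<lambda>i. [(i, P (c+1)), (i, P (c+2))]) xs)"
    using Cons.IH Cons.prems by simp
  then show ?case using Cons.prems by (simp add: dbl_def)
qed

lemma count_distinct: "distinct xs \<Longrightarrow> x \<in> set xs \<Longrightarrow> count_list xs x = 1"
  by (induction xs) (auto simp: count_list_0_iff)

lemma count_dbl: "count_list (dbl xs) x = 2 * count_list xs x"
  by (induction xs) (auto simp: dbl_def)

lemma runM: "distinct (a@b) \<Longrightarrow>
  2 * run (rev a @ b) (map (\<lambda>i. (i,True)) b) = length b * (2*length a + length b + 1)
  \<and> fst_state (rev a @ b) (map (\<lambda>i. (i,True)) b) = rev (a@b)"
proof (induction b arbitrary: a)
  case Nil then show ?case by simp
next
  case (Cons y b)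
  have ya: "y \<notin> set a" using Cons.prems by auto
  have m: "mtf y (rev a @ y # b) = rev (a@[y]) @ b"
    using ya by (simp add: mtf_def remove1_append)
  have p: "pos y (rev a @ y # b) = length a" using ya by (simp add: pos_append)
  have IH: "2 * run (rev (a@[y]) @ b) (map (\<lambda>i. (i,True)) b) = length b * (2*length (a@[y]) + length b + 1)
     \<and> fst_state (rev (a@[y]) @ b) (map (\<lambda>i. (i,True)) b) = rev ((a@[y])@b)"
    using Cons.IH[of "a@[y]"] Cons.prems by simp
  show ?case using IH by (simp add: m p algebra_simps)
qed

lemma runS: "distinct (a@b) \<Longrightarrow>
  2 * run (a @ b) (map (\<lambda>i. (i,False)) b) = length b * (2*length a + length b + 1)
  \<and> fst_state (a @ b) (map (\<lambda>i. (i,False)) b) = a@b"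
proof (induction b arbitrary: a)
  case Nil then show ?case by simp
next
  case (Cons y b)
  have ya: "y \<notin> set a" using Cons.prems by auto
  have p: "pos y (a @ y # b) = length a" using ya by (simp add: pos_append)
  have IH: "2 * run ((a@[y]) @ b) (map (\<lambda>i. (i,False)) b) = length b * (2*length (a@[y]) + length b + 1)
     \<and> fst_state ((a@[y]) @ b) (map (\<lambda>i. (i,False)) b) = (a@[y])@b"
    using Cons.IH[of "a@[y]"] Cons.prems by simp
  show ?case using IH by (simp add: p algebra_simps)
qed

lemma mtf_same[simp]: "mtf y (y # L) = y # L" by (simp add: mtf_def)

lemma runD: "distinct (a@b) \<Longrightarrow>
  2 * run (rev a @ b) (concat (map (\<lambda>i. [(i,True),(i,e)]) b)) = length b * (2*length a + length b + 1) + 2 * length b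
  \<and> fst_state (rev a @ b) (concat (map (\<lambda>i. [(i,True),(i,e)]) b)) = rev (a@b)"
proof (induction b arbitrary: a)
  case Nil then show ?case by simp
next
  case (Cons y b)
  have ya: "y \<notin> set a" using Cons.prems by auto
  have m: "mtf y (rev a @ y # b) = y # rev a @ b"
    using ya by (simp add: mtf_def remove1_append)
  have m2: "mtf y (y # rev a @ b) = y # rev a @ b" by (simp add: mtf_def)
  have p: "pos y (rev a @ y # b) = length a" using ya by (simp add: pos_append)
  have IH: "2 * run (rev (a@[y]) @ b) (concat (map (\<lambda>i. [(i,True),(i,e)]) b)) = length b * (2*length (a@[y]) + length b + 1) + 2 * length b
     \<and> fst_state (rev (a@[y]) @ b) (concat (map (\<lambda>i. [(i,True),(i,e)]) b)) = rev ((a@[y])@b)"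
    using Cons.IH[of "a@[y]"] Cons.prems by simp
  show ?case using IH by (cases e) (simp_all add: m p algebra_simps)
qed

lemma runT: "distinct (c@b) \<Longrightarrow>
  run (c @ b) (concat (map (\<lambda>i. [(i,False),(i,True)]) (rev b))) = 2 * length b * length (c@b)
  \<and> fst_state (c @ b) (concat (map (\<lambda>i. [(i,False),(i,True)]) (rev b))) = b @ c"
proof (induction b arbitrary: c rule: rev_induct)
  case Nil then show ?case by simp
next
  case (snoc y b)
  have yc: "y \<notin> set c" "y \<notin> set b" using snoc.prems by auto
  have m: "mtf y (c @ b @ [y]) = (y#c) @ b"
    using yc by (simp add: mtf_def remove1_append)
  have p: "pos y (c @ b @ [y]) = length c + length b" using yc by (simp add: pos_append)
  have IH: "run ((y#c) @ b) (concat (map (\<lambda>i. [(i,False),(i,True)]) (rev b))) = 2 * length b * length ((y#c)@b)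
     \<and> fst_state ((y#c) @ b) (concat (map (\<lambda>i. [(i,False),(i,True)]) (rev b))) = b @ y # c"
    using snoc.IH[of "y#c"] snoc.prems by auto
  show ?case using IH by (simp add: m p algebra_simps)
qed

lemma move_fwd_id: "x \<notin> set a \<Longrightarrow> move_fwd x (length a) (a @ x # b) = a @ x # b"
  by (simp add: move_fwd_def remove1_append)

lemma move_fwd_pos: "x \<in> set L \<Longrightarrow> move_fwd x (pos x L) L = L"
proof -
  assume "x \<in> set L"
  then obtain a b where L: "L = a @ x # b" "x \<notin> set a" using split_list_first by metis
  then show ?thesis by (simp add: pos_append move_fwd_id)
qed

lemma off_run: "distinct L \<Longrightarrow> set L = S \<Longrightarrow> length L = N \<Longrightarrow> \<forall>d\<in>set ds. fst d \<in> S \<Longrightarrow>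
  off_cost L (map fst ds) (map (\<lambda>(x,b). ([], if b then 0 else N)) ds) = run L ds"
proof (induction L ds rule: run.induct)
  case (1 L) then show ?case by simp
next
  case (2 L x b ds)
  have x: "x \<in> set L" using 2 by auto
  have pl: "pos x L < N" using pos_lt[OF x] 2 by simp
  have nxt: "move_fwd x (min (if b then 0 else N) (pos x L)) L = (if b then mtf x L else L)"
    using pl move_fwd_pos[OF x] by (auto simp: move_fwd_def mtf_def)
  have inv: "distinct (if b then mtf x L else L)" "set (if b then mtf x L else L) = S"
     "length (if b then mtf x L else L) = N"
    using 2 mtf_distinct mtf_set[OF x] x length_pos_if_in_set[OF x] by (auto simp: mtf_def length_remove1)
  show ?case using 2(1)[OF inv] 2(5) by (simp add: nxt Let_def)
qed



definition sig :: "nat \<Rightarrow> nat list" where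
  "sig n = [0..<n] @ dbl [0..<n] @ rev [0..<n] @ dbl (rev [0..<n])"

lemma dec_sig: "dec P [] (sig n) = map (\<lambda>i. (i, P 1)) [0..<n]
   @ concat (map (\<lambda>i. [(i, P 2), (i, P 3)]) [0..<n])
   @ map (\<lambda>i. (i, P 4)) (rev [0..<n])
   @ concat (map (\<lambda>i. [(i, P 5), (i, P 6)]) (rev [0..<n]))"
proof -
  define L where "L = [0..<n]"
  have dL: "distinct L" "distinct (rev L)" unfolding L_def by auto
  have c1: "\<forall>i\<in>set L. count_list L i = 1" using count_distinct[OF dL(1)] by auto
  have c2: "\<forall>i\<in>set L. count_list (dbl L) i = 2" using c1 by (simp add: count_dbl)
  have e1: "dec P [] L = map (\<lambda>i. (i, P 1)) L"
    using dec_single[OF dL(1), of "[]" 0 P] by simp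
  have e2: "dec P L (dbl L) = concat (map (\<lambda>i. [(i, P 2), (i, P 3)]) L)"
    using dec_dbl[OF dL(1), of L 1 P] c1 by (simp add: numeral_eq_Suc)
  have e3: "dec P (L @ dbl L) (rev L) = map (\<lambda>i. (i, P 4)) (rev L)"
    using dec_single[OF dL(2), of "L @ dbl L" 3 P] c1 c2 by (simp add: numeral_eq_Suc)
  have e4: "dec P (L @ dbl L @ rev L) (dbl (rev L)) = concat (map (\<lambda>i. [(i, P 5), (i, P 6)]) (rev L))"
    using dec_dbl[OF dL(2), of "L @ dbl L @ rev L" 4 P] c1 c2 by (simp add: numeral_eq_Suc)
  show ?thesis unfolding sig_def L_def[symmetric]
    by (simp add: dec_append e1 e2 e3 e4 del: upt_Suc)
qed

lemma facts_all:
  fixes n :: nat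
  defines "L \<equiv> [0..<n]"
  shows
  "2*run L (map (\<lambda>i.(i,True)) L) = n*(n+1)" "fst_state L (map (\<lambda>i.(i,True)) L) = rev L"
  "run (rev L) (concat (map (\<lambda>i.[(i,False),(i,True)]) L)) = 2*n*n"
  "fst_state (rev L) (concat (map (\<lambda>i.[(i,False),(i,True)]) L)) = rev L"
  "2*run (rev L) (map (\<lambda>i.(i,False)) (rev L)) = n*(n+1)"
  "fst_state (rev L) (map (\<lambda>i.(i,False)) (rev L)) = rev L"
  "2*run (rev L) (concat (map (\<lambda>i.[(i,True),(i,e)]) (rev L))) = n*(n+1) + 2*n"
  "2*run L (map (\<lambda>i.(i,False)) L) = n*(n+1)" "fst_state L (map (\<lambda>i.(i,False)) L) = L"
  "2*run L (concat (map (\<lambda>i.[(i,True),(i,e)]) L)) = n*(n+1) + 2*n"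
  "fst_state L (concat (map (\<lambda>i.[(i,True),(i,e)]) L)) = rev L"
  "2*run (rev L) (map (\<lambda>i.(i,True)) (rev L)) = n*(n+1)"
  "fst_state (rev L) (map (\<lambda>i.(i,True)) (rev L)) = L"
  "run L (concat (map (\<lambda>i.[(i,False),(i,True)]) (rev L))) = 2*n*n"
proof -
  have d: "distinct L" "distinct (rev L)" and len: "length L = n" unfolding L_def by auto
  show "2*run L (map (\<lambda>i.(i,True)) L) = n*(n+1)" "fst_state L (map (\<lambda>i.(i,True)) L) = rev L"
    using runM[of "[]" L] d len by (simp_all add: algebra_simps)
  show "run (rev L) (concat (map (\<lambda>i.[(i,False),(i,True)]) L)) = 2*n*n"
       "fst_state (rev L) (concat (map (\<lambda>i.[(i,False),(i,True)]) L)) = rev L"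
    using runT[of "[]" "rev L"] d len by simp_all
  show "2*run (rev L) (map (\<lambda>i.(i,False)) (rev L)) = n*(n+1)"
       "fst_state (rev L) (map (\<lambda>i.(i,False)) (rev L)) = rev L"
    using runS[of "[]" "rev L"] d len by (simp_all add: algebra_simps)
  show "2*run (rev L) (concat (map (\<lambda>i.[(i,True),(i,e)]) (rev L))) = n*(n+1) + 2*n"
    using runD[of "[]" "rev L" e] d len by (simp add: algebra_simps)
  show "2*run L (map (\<lambda>i.(i,False)) L) = n*(n+1)" "fst_state L (map (\<lambda>i.(i,False)) L) = L"
    using runS[of "[]" L] d len by (simp_all add: algebra_simps)
  show "2*run L (concat (map (\<lambda>i.[(i,True),(i,e)]) L)) = n*(n+1) + 2*n"
       "fst_state L (concat (map (\<lambda>i.[(i,True),(i,e)]) L)) = rev L"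
    using runD[of "[]" L e] d len by (simp_all add: algebra_simps)
  show "2*run (rev L) (map (\<lambda>i.(i,True)) (rev L)) = n*(n+1)"
       "fst_state (rev L) (map (\<lambda>i.(i,True)) (rev L)) = L"
    using runM[of "[]" "rev L"] d len by (simp_all add: algebra_simps)
  show "run L (concat (map (\<lambda>i.[(i,False),(i,True)]) (rev L))) = 2*n*n"
    using runT[of "[]" L] d len by simp
qed

lemma mtfo_val: "2 * MTFO [0..<n] (sig n) = 7*n*n + 5*n"
proof -
  define L where "L = [0..<n]"
  note f = facts_all[of n, folded L_def]
  have "MTFO L (sig n) = run L (dec odd [] (sig n))" unfolding MTFO_def alg_run ..
  also have "dec odd [] (sig n) = map (\<lambda>i.(i,True)) L @ concat (map (\<lambda>i.[(i,False),(i,True)]) L)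
     @ map (\<lambda>i.(i,False)) (rev L) @ concat (map (\<lambda>i.[(i,True),(i,False)]) (rev L))"
    unfolding dec_sig L_def by simp
  finally show ?thesis unfolding L_def[symmetric]
    by (simp add: run_append fst_state_append f algebra_simps)
qed

lemma mtfe_val: "2 * MTFE [0..<n] (sig n) = 7*n*n + 5*n"
proof -
  define L where "L = [0..<n]"
  note f = facts_all[of n, folded L_def]
  have "MTFE L (sig n) = run L (dec even [] (sig n))" unfolding MTFE_def alg_run ..
  also have "dec even [] (sig n) = map (\<lambda>i.(i,False)) L @ concat (map (\<lambda>i.[(i,True),(i,False)]) L)
     @ map (\<lambda>i.(i,True)) (rev L) @ concat (map (\<lambda>i.[(i,False),(i,True)]) (rev L))"
    unfolding dec_sig L_def by simp
  finally show ?thesis unfolding L_def[symmetric]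
    by (simp add: run_append fst_state_append f algebra_simps)
qed

lemma opt_val: "OPT [0..<n] (sig n) \<le> 2*n*n + 4*n"
proof -
  define L where "L = [0..<n]"
  note f = facts_all[of n, folded L_def]
  define ds where "ds = map (\<lambda>i.(i,False)) L @ concat (map (\<lambda>i.[(i,True),(i,True)]) L)
     @ map (\<lambda>i.(i,False)) (rev L) @ concat (map (\<lambda>i.[(i,True),(i,True)]) (rev L))"
  define acts where "acts = map (\<lambda>(x,b). (([]::nat list), if b then 0 else n)) ds"
  have mf: "map fst ds = sig n" unfolding ds_def sig_def L_def dbl_def
    by (simp add: map_concat comp_def del: upt_Suc)
  have la: "length acts = length (sig n)" unfolding acts_def mf[symmetric] by simp
  have oc: "off_cost L (sig n) acts = run L ds"
    unfolding mf[symmetric] acts_def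
    by (rule off_run[where S="set L"]) (auto simp: L_def ds_def)
  have r: "2 * run L ds = 4*n*n + 8*n"
    unfolding ds_def by (simp add: run_append fst_state_append f algebra_simps)
  have "OPT L (sig n) \<le> off_cost L (sig n) acts"
    unfolding OPT_def by (rule cINF_lower) (use la in auto)
  then show ?thesis using oc r unfolding L_def by simp
qed



lemma part2:
  fixes c b :: real
  assumes c: "c < 7/4"
  shows "\<exists>(init :: nat list) \<sigma>. distinct init \<and> set \<sigma> \<subseteq> set init \<and>
               real (min (MTFO init \<sigma>) (MTFE init \<sigma>)) > c * real (OPT init \<sigma>) + b"
proof -
  define c' where "c' = max c 0"
  define d where "d = 7/4 - c'"
  have d0: "d > 0" and c'0: "c' \<ge> 0" and cc: "c \<le> c'" and c'7: "c' \<le> 7/4"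
    unfolding d_def c'_def using c by auto
  define n where "n = nat \<lceil>(\<bar>b\<bar> + 5) / d\<rceil> + 1"
  define x where "x = real n"
  have x1: "x \<ge> 1" unfolding x_def n_def by simp
  have xg: "x \<ge> (\<bar>b\<bar> + 5) / d" unfolding x_def n_def by linarith
  have dx: "d * x \<ge> \<bar>b\<bar> + 5" using xg d0 by (simp add: pos_divide_le_eq mult.commute)
  have M: "2 * real (min (MTFO [0..<n] (sig n)) (MTFE [0..<n] (sig n))) = 7*(x*x) + 5*x"
  proof -
    have "min (MTFO [0..<n] (sig n)) (MTFE [0..<n] (sig n)) = MTFO [0..<n] (sig n)"
      using mtfo_val[of n] mtfe_val[of n] by simp
    then have "2 * min (MTFO [0..<n] (sig n)) (MTFE [0..<n] (sig n)) = 7*n*n + 5*n"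
      using mtfo_val[of n] by simp
    then have "real (2 * min (MTFO [0..<n] (sig n)) (MTFE [0..<n] (sig n))) = real (7*n*n + 5*n)"
      by simp
    then show ?thesis unfolding x_def by simp
  qed
  define Op where "Op = real (OPT [0..<n] (sig n))"
  have Op: "Op \<le> 2*x*x + 4*x" "Op \<ge> 0"
  proof -
    have "real (OPT [0..<n] (sig n)) \<le> real (2*n*n + 4*n)" using opt_val[of n] by linarith
    then show "Op \<le> 2*x*x + 4*x" unfolding Op_def x_def by simp
  qed (simp add: Op_def)
  have h1: "c * Op \<le> c' * Op" using cc Op(2) by (simp add: mult_right_mono)
  have h2: "c' * Op \<le> c' * (2*x*x + 4*x)" using Op(1) c'0 by (simp add: mult_left_mono)
  have h3: "c' * x \<le> 7/4 * x" using c'7 x1 by (simp add: mult_right_mono)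
  have h4: "d * (x * x) \<ge> (\<bar>b\<bar> + 5) * x" using mult_right_mono[OF dx, of x] x1 by (simp add: mult.assoc)
  have h5: "d * (x * x) = 7/4*(x*x) - c'*(x*x)" unfolding d_def by (simp add: algebra_simps)
  have h6: "\<bar>b\<bar> * x \<ge> \<bar>b\<bar>" using x1 by (simp add: mult_left_mono[of 1 x "\<bar>b\<bar>", simplified])
  have h7: "c' * (2*x*x + 4*x) = 2*(c'*(x*x)) + 4*(c'*x)" by (simp add: algebra_simps)
  have h8: "(\<bar>b\<bar> + 5) * x = \<bar>b\<bar> * x + 5 * x" by (simp add: algebra_simps)
  have "real (min (MTFO [0..<n] (sig n)) (MTFE [0..<n] (sig n))) > c * Op + b"
    using M h1 h2 h3 h4 h5 h6 h7 h8 x1 by linarith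
  moreover have "set (sig n) \<subseteq> set [0..<n]" unfolding sig_def dbl_def by auto
  ultimately show ?thesis unfolding Op_def by (intro exI[of _ "[0..<n]"] exI[of _ "sig n"]) auto
qed


theorem theorem6:
  shows "(\<forall>(init :: 'a list) \<sigma>. distinct init \<longrightarrow> set \<sigma> \<subseteq> set init \<longrightarrow>
            min (MTFO init \<sigma>) (MTFE init \<sigma>) \<le> 2 * OPT init \<sigma>)
       \<and> (\<forall>c b :: real. c < 7/4 \<longrightarrow>
            (\<exists>(init :: nat list) \<sigma>. distinct init \<and> set \<sigma> \<subseteq> set init \<and>
               real (min (MTFO init \<sigma>) (MTFE init \<sigma>)) > c * real (OPT init \<sigma>) + b))"
  using part1 part2 by blast

end
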